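(* For each elementary cellular automaton $F$ with rule number in $\{0, 1, 2, 4, 8, 10, 12, 19, 24, 34, 36, 38, 42, 46, 72, 76, 108, 127, 138, 200\}$, the deterministic communication complexity $D(\textsc{Pred}_{F,n})$ is $O(1)$, i.e. bounded by a constant independent of $n$.
   Context: An elementary cellular automaton (ECA) with rule number $N\in\{0,\dots,255\}$ is the map $F:\{0,1\}^{\mathbb Z}\to\{0,1\}^{\mathbb Z}$ given by $F(x)_i=f(x_{i-1},x_i,x_{i+1})$. Here the local rule $f:\{0,1\}^3\to\{0,1\}$ is determined by $N=\sum_{a,b,c\in\{0,1\}}2^{4a+2b+c}f(a,b,c)$. On a finite word of length $m\ge 3$, $F$ produces the word of length $m-2$ obtained by applying $f$ at every position whose full neighbourhood lies in the word. For $n\ge1$, $\textsc{Pred}_{F,n}:\{0,1\}^{2n+1}\to\{0,1\}$ maps a word $x=x_{-n}\cdots x_n$ to the single letter of $F^n(x)$, i.e. the state of the central cell after $n$ steps. For a function $g:X\times Y\to Z$, $D(g)$ is the minimal depth of a deterministic two-party protocol computing $g$. In such a protocol, Alice knows $x$ and Bob knows $y$. The protocol is a binary tree: each internal node is labelled by a function of Alice's input only or of Bob's input only, with values in $\{\text{left},\text{right}\}$, and each leaf is labelled by an output value. For $g:\{0,1\}^m\to Z$, set $D(g)=\max_{0\le i<m}D(g_i)$, where $g_i:\{0,1\}^i\times\{0,1\}^{m-i}\to Z$ is $g_i(x,y)=g(xy)$. *)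

theory Defs
  imports Main
begin

definition bitval :: "bool \<Rightarrow> nat" where
  "bitval b = (if b then 1 else 0)"

definition eca_local :: "nat \<Rightarrow> bool \<Rightarrow> bool \<Rightarrow> bool \<Rightarrow> bool" where
  "eca_local N a b c = odd (N div 2 ^ (4 * bitval a + 2 * bitval b + bitval c))"

definition eca_word :: "nat \<Rightarrow> bool list \<Rightarrow> bool list" where
  "eca_word N w = map (\<lambda>i. eca_local N (w ! i) (w ! (i + 1)) (w ! (i + 2))) [0..<length w - 2]"

(* Pred_{F,n}: word of length 2n+1 to the single letter of F^n(x) *)
definition Pred :: "nat \<Rightarrow> nat \<Rightarrow> bool list \<Rightarrow> bool" where
  "Pred N n x = hd ((eca_word N ^^ n) x)"

datatype ('x, 'y, 'z) protocol =
    Leaf 'z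
  | AliceNode "'x \<Rightarrow> bool" "('x, 'y, 'z) protocol" "('x, 'y, 'z) protocol"
  | BobNode "'y \<Rightarrow> bool" "('x, 'y, 'z) protocol" "('x, 'y, 'z) protocol"

fun run :: "('x, 'y, 'z) protocol \<Rightarrow> 'x \<Rightarrow> 'y \<Rightarrow> 'z" where
  "run (Leaf z) x y = z"
| "run (AliceNode q l r) x y = (if q x then run l x y else run r x y)"
| "run (BobNode q l r) x y = (if q y then run l x y else run r x y)"

fun depth :: "('x, 'y, 'z) protocol \<Rightarrow> nat" where
  "depth (Leaf z) = 0"
| "depth (AliceNode q l r) = Suc (max (depth l) (depth r))"
| "depth (BobNode q l r) = Suc (max (depth l) (depth r))"

definition D2 :: "'x set \<Rightarrow> 'y set \<Rightarrow> ('x \<Rightarrow> 'y \<Rightarrow> 'z) \<Rightarrow> nat" where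
  "D2 X Y g = (LEAST d. \<exists>p :: ('x, 'y, 'z) protocol.
      depth p = d \<and> (\<forall>x\<in>X. \<forall>y\<in>Y. run p x y = g x y))"

definition words :: "nat \<Rightarrow> bool list set" where
  "words m = {w. length w = m}"

definition D :: "nat \<Rightarrow> (bool list \<Rightarrow> 'z) \<Rightarrow> nat" where
  "D m g = Max ((\<lambda>i. D2 (words i) (words (m - i)) (\<lambda>x y. g (x @ y))) ` {0..<m})"

end

theory Submission
  imports Defs
begin

lemma proto_exists:
  fixes msg :: "'x \<Rightarrow> bool list"
  assumes "\<forall>x\<in>X. length (msg x) = k"
  shows "\<exists>p :: ('x,'y,bool) protocol. depth p \<le> k+1 \<and> (\<forall>x\<in>X. \<forall>y. run p x y = H (msg x) y)"
  using assms
proof (induction k arbitrary: X msg H)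
  case 0
  show ?case
    by (rule exI[of _ "BobNode (H []) (Leaf True) (Leaf False)"]) (use 0 in auto)
next
  case (Suc k)
  define X1 where "X1 = {x\<in>X. hd (msg x)}"
  define X2 where "X2 = {x\<in>X. \<not> hd (msg x)}"
  have l1: "\<forall>x\<in>X1. length (tl (msg x)) = k" using Suc.prems X1_def by auto
  have l2: "\<forall>x\<in>X2. length (tl (msg x)) = k" using Suc.prems X2_def by auto
  obtain p1 :: "('x,'y,bool) protocol" where p1: "depth p1 \<le> k+1" "\<forall>x\<in>X1. \<forall>y. run p1 x y = H (True # tl (msg x)) y"
    using Suc.IH[OF l1, of "\<lambda>r y. H (True # r) y"] by blast
  obtain p2 :: "('x,'y,bool) protocol" where p2: "depth p2 \<le> k+1" "\<forall>x\<in>X2. \<forall>y. run p2 x y = H (False # tl (msg x)) y"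
    using Suc.IH[OF l2, of "\<lambda>r y. H (False # r) y"] by blast
  have "\<forall>x\<in>X. \<forall>y. run (AliceNode (\<lambda>x. hd (msg x)) p1 p2) x y = H (msg x) y"
  proof (intro ballI allI)
    fix x y assume x: "x \<in> X"
    then have ne: "msg x \<noteq> []" using Suc.prems by auto
    show "run (AliceNode (\<lambda>x. hd (msg x)) p1 p2) x y = H (msg x) y"
    proof (cases "hd (msg x)")
      case True
      then have "x \<in> X1" using x X1_def by auto
      note xin = this
      have "run (AliceNode (\<lambda>x. hd (msg x)) p1 p2) x y = run p1 x y" using True by simp
      also have "\<dots> = H (True # tl (msg x)) y" using p1 xin by blast
      also have "True # tl (msg x) = msg x" using ne True by (cases "msg x") auto
      finally show ?thesis .
    next
      case False
      then have "x \<in> X2" using x X2_def by auto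
      note xin = this
      have "run (AliceNode (\<lambda>x. hd (msg x)) p1 p2) x y = run p2 x y" using False by simp
      also have "\<dots> = H (False # tl (msg x)) y" using p2 xin by blast
      also have "False # tl (msg x) = msg x" using ne False by (cases "msg x") auto
      finally show ?thesis .
    qed
  qed
  moreover have "depth (AliceNode (\<lambda>x. hd (msg x)) p1 p2) \<le> Suc k + 1" using p1 p2 by simp
  ultimately show ?case by blast
qed

lemma D2_bound:
  fixes g :: "'x \<Rightarrow> 'y \<Rightarrow> bool" and msg :: "'x \<Rightarrow> bool list"
  assumes "\<forall>x\<in>X. length (msg x) = k"
    and "\<forall>x\<in>X. \<forall>x'\<in>X. msg x = msg x' \<longrightarrow> (\<forall>y\<in>Y. g x y = g x' y)"
  shows "D2 X Y g \<le> k+1"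
proof -
  define H where "H = (\<lambda>r y. g (SOME x. x \<in> X \<and> msg x = r) y)"
  obtain p :: "('x,'y,bool) protocol" where p: "depth p \<le> k+1" "\<forall>x\<in>X. \<forall>y. run p x y = H (msg x) y"
    using proto_exists[OF assms(1), of H] by blast
  have c: "\<forall>x\<in>X. \<forall>y\<in>Y. run p x y = g x y"
  proof (intro ballI)
    fix x y assume x: "x \<in> X" and y: "y \<in> Y"
    have ex: "\<exists>x'. x' \<in> X \<and> msg x' = msg x" using x by blast
    have s: "(SOME x'. x' \<in> X \<and> msg x' = msg x) \<in> X \<and> msg (SOME x'. x' \<in> X \<and> msg x' = msg x) = msg x"
      using someI_ex[OF ex] .
    have "run p x y = H (msg x) y" using p(2) x by blast
    also have "\<dots> = g (SOME x'. x' \<in> X \<and> msg x' = msg x) y" by (simp add: H_def)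
    also have "\<dots> = g x y" using assms(2)[rule_format, OF conjunct1[OF s] x conjunct2[OF s] y] .
    finally show "run p x y = g x y" .
  qed
  have "D2 X Y g \<le> depth p"
    unfolding D2_def by (rule Least_le) (use c in blast)
  then show ?thesis using p by simp
qed

lemma length_eca_word[simp]: "length (eca_word N w) = length w - 2"
  by (simp add: eca_word_def)

lemma length_eca_pow: "length ((eca_word N ^^ k) w) = length w - 2*k"
  by (induction k) auto

lemma eca_sub1:
  assumes "b \<le> length w"
  shows "eca_word N (drop a (take b w)) = drop a (take (b-2) (eca_word N w))"
proof (intro nth_equalityI)
  show "length (eca_word N (drop a (take b w))) = length (drop a (take (b - 2) (eca_word N w)))"
    using assms by simp
next
  fix i assume i: "i < length (eca_word N (drop a (take b w)))"
  then have i2: "a + i + 2 < b" using assms by simp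
  then have i3: "a + i < length w - 2" using assms by simp
  show "eca_word N (drop a (take b w)) ! i = drop a (take (b - 2) (eca_word N w)) ! i"
    using i i2 i3 assms by (simp add: eca_word_def add.assoc nth_upt)
qed

lemma eca_subk:
  assumes "b \<le> length w"
  shows "(eca_word N ^^ k) (drop a (take b w)) = drop a (take (b-2*k) ((eca_word N ^^ k) w))"
  using assms
proof (induction k)
  case 0 then show ?case by simp
next
  case (Suc k)
  have "b - 2*k \<le> length ((eca_word N ^^ k) w)" using Suc.prems by (simp add: length_eca_pow)
  then show ?case using Suc by (simp add: eca_sub1)
qed

definition LocId :: "nat \<Rightarrow> nat \<Rightarrow> nat \<Rightarrow> nat \<Rightarrow> bool" where
  "LocId N t p off = (\<forall>v. length v = 2*(t+p)+1 \<longrightarrow>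
     (eca_word N ^^ (t+p)) v = (eca_word N ^^ t) (drop off (take (off+2*t+1) v)))"

lemma pred_step:
  assumes loc: "LocId N t p off" and tm: "t \<le> m" and op: "off \<le> 2*p"
    and lw: "length w = 2*(m+p)+1"
  shows "Pred N (m+p) w = Pred N m (drop off (take (off+2*m+1) w))"
proof -
  define k where "k = m - t"
  define u where "u = (eca_word N ^^ k) w"
  have lu: "length u = 2*(t+p)+1" using lw tm by (simp add: u_def length_eca_pow k_def)
  have e: "m + p = (t+p) + k" using tm k_def by simp
  have "(eca_word N ^^ (m+p)) w = (eca_word N ^^ (t+p)) u"
    by (simp only: e funpow_add comp_apply u_def)
  also have "\<dots> = (eca_word N ^^ t) (drop off (take (off+2*t+1) u))"
    using loc lu unfolding LocId_def by blast
  also have "drop off (take (off+2*t+1) u) = (eca_word N ^^ k) (drop off (take (off+2*m+1) w))"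
  proof -
    have "off+2*m+1 \<le> length w" using lw op by simp
    from eca_subk[OF this, where N=N and k=k and a=off]
    have "(eca_word N ^^ k) (drop off (take (off+2*m+1) w)) = drop off (take (off+2*m+1-2*k) u)"
      by (simp add: u_def)
    moreover have "off+2*m+1-2*k = off+2*t+1" using tm k_def by simp
    ultimately show ?thesis by simp
  qed
  also have "(eca_word N ^^ t) ((eca_word N ^^ k) (drop off (take (off+2*m+1) w)))
      = (eca_word N ^^ m) (drop off (take (off+2*m+1) w))"
  proof -
    have e2: "m = t + k" using tm k_def by simp
    show ?thesis by (simp only: e2 funpow_add comp_apply)
  qed
  finally show ?thesis by (simp add: Pred_def)
qed

lemma window:
  assumes loc: "LocId N t p off" and pp: "0 < p" and op: "off \<le> 2*p"
  shows "\<exists>a b G. a \<le> b \<and> b \<le> 2*n+1 \<and> b - a \<le> 2*(t+p) \<and>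
     (\<forall>w. length w = 2*n+1 \<longrightarrow> Pred N n w = G (drop a (take b w)))"
proof (induction n rule: less_induct)
  case (less n)
  show ?case
  proof (cases "n < t + p")
    case True
    show ?thesis
      by (rule exI[of _ 0], rule exI[of _ "2*n+1"], rule exI[of _ "Pred N n"]) (use True in auto)
  next
    case False
    define m where "m = n - p"
    have tm: "t \<le> m" and nm: "n = m + p" and mn: "m < n" using False pp m_def by auto
    obtain a b G where ab: "a \<le> b" "b \<le> 2*m+1" "b - a \<le> 2*(t+p)"
      and G: "\<forall>w. length w = 2*m+1 \<longrightarrow> Pred N m w = G (drop a (take b w))"
      using less.IH[OF mn] by blast
    have "\<forall>w. length w = 2*n+1 \<longrightarrow> Pred N n w = G (drop (off+a) (take (off+b) w))"
    proof (intro allI impI)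
      fix w :: "bool list" assume lw: "length w = 2*n+1"
      have "Pred N n w = Pred N m (drop off (take (off+2*m+1) w))"
        using pred_step[OF loc tm op] lw nm by simp
      also have "\<dots> = G (drop a (take b (drop off (take (off+2*m+1) w))))"
        using G lw nm op by simp
      also have "drop a (take b (drop off (take (off+2*m+1) w))) = drop (off+a) (take (off+b) w)"
      proof -
        have "take b (drop off (take (off+2*m+1) w)) = drop off (take (b+off) (take (off+2*m+1) w))"
          by (simp add: take_drop)
        also have "take (b+off) (take (off+2*m+1) w) = take (off+b) w" using ab by (simp add: min_def add.commute)
        finally show ?thesis by (simp add: drop_drop add.commute)
      qed
      finally show "Pred N n w = G (drop (off+a) (take (off+b) w))" .
    qed
    moreover have "off + a \<le> off + b" "off + b \<le> 2*n+1" "(off+b) - (off+a) \<le> 2*(t+p)"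
      using ab nm op by auto
    ultimately show ?thesis by blast
  qed
qed

lemma generic:
  assumes loc: "LocId N t p off" and pp: "0 < p" and op: "off \<le> 2*p"
  shows "\<exists>C::nat. \<forall>n::nat \<ge> 1. D (2 * n + 1) (Pred N n) \<le> C"
proof (intro exI allI impI)
  fix n :: nat assume "1 \<le> n"
  obtain a b G where ab: "a \<le> b" "b \<le> 2*n+1" "b - a \<le> 2*(t+p)"
    and G: "\<forall>w. length w = 2*n+1 \<longrightarrow> Pred N n w = G (drop a (take b w))"
    using window[OF loc pp op] by blast
  have B: "\<forall>i\<in>{0..<2*n+1}. D2 (words i) (words (2*n+1 - i)) (\<lambda>x y. Pred N n (x @ y)) \<le> 2*(t+p)+1"
  proof
    fix i assume i: "i \<in> {0..<2*n+1}"
    have "D2 (words i) (words (2*n+1 - i)) (\<lambda>x y. Pred N n (x @ y)) \<le> (min b i - a) + 1"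
    proof (rule D2_bound[where msg = "\<lambda>x. drop a (take b x)"])
      show "\<forall>x\<in>words i. length (drop a (take b x)) = min b i - a" by (simp add: words_def min.commute)
      show "\<forall>x\<in>words i. \<forall>x'\<in>words i. drop a (take b x) = drop a (take b x') \<longrightarrow>
          (\<forall>y\<in>words (2*n+1-i). Pred N n (x @ y) = Pred N n (x' @ y))"
      proof (intro ballI impI)
        fix x x' y assume x: "x \<in> words i" and x': "x' \<in> words i"
          and e: "drop a (take b x) = drop a (take b x')" and y: "y \<in> words (2*n+1-i)"
        have l: "length (x@y) = 2*n+1" "length (x'@y) = 2*n+1" using x x' y i by (auto simp: words_def)
        have "drop a (take b (x@y)) = drop a (take b (x'@y))"
          using e x x' by (simp add: words_def take_append drop_append)
        moreover have "Pred N n (x@y) = G (drop a (take b (x@y)))" using G l(1) by blast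
        moreover have "Pred N n (x'@y) = G (drop a (take b (x'@y)))" using G l(2) by blast
        ultimately show "Pred N n (x @ y) = Pred N n (x' @ y)" by simp
      qed
    qed
    also have "\<dots> \<le> 2*(t+p)+1" using ab by simp
    finally show "D2 (words i) (words (2*n+1 - i)) (\<lambda>x y. Pred N n (x @ y)) \<le> 2*(t+p)+1" .
  qed
  show "D (2 * n + 1) (Pred N n) \<le> 2*(t+p)+1"
    unfolding D_def
  proof (rule Max.boundedI)
    show "finite ((\<lambda>i. D2 (words i) (words (2 * n + 1 - i)) (\<lambda>x y. Pred N n (x @ y))) ` {0..<2 * n + 1})" by simp
    show "(\<lambda>i. D2 (words i) (words (2 * n + 1 - i)) (\<lambda>x y. Pred N n (x @ y))) ` {0..<2 * n + 1} \<noteq> {}" by simp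
  next
    fix z assume "z \<in> (\<lambda>i. D2 (words i) (words (2 * n + 1 - i)) (\<lambda>x y. Pred N n (x @ y))) ` {0..<2 * n + 1}"
    then show "z \<le> 2*(t+p)+1" using B by blast
  qed
qed


lemma eca_nth: "i < length w - 2 \<Longrightarrow> eca_word N w ! i = eca_local N (w!i) (w!(i+1)) (w!(i+2))"
  by (simp add: eca_word_def)

lemma eca_cons: "eca_word N (a#b#c#r) = eca_local N a b c # eca_word N (b#c#r)"
proof (intro nth_equalityI)
  show "length (eca_word N (a#b#c#r)) = length (eca_local N a b c # eca_word N (b#c#r))" by simp
next
  fix i assume "i < length (eca_word N (a#b#c#r))"
  then show "eca_word N (a#b#c#r) ! i = (eca_local N a b c # eca_word N (b#c#r)) ! i"
    by (cases i) (auto simp: eca_nth)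
qed

lemma eca_short: "eca_word N [a,b] = []" "eca_word N [a] = []" "eca_word N [] = []"
  by (auto simp: eca_word_def)

lemma funpow_expand: "f ^^ 1 = f" "f ^^ 2 = f \<circ> f" "f ^^ 3 = f \<circ> f \<circ> f" "f ^^ 4 = f \<circ> f \<circ> f \<circ> f"
  by (auto simp: numeral_eq_Suc)

lemma len5: "length v = 5 \<Longrightarrow> \<exists>a0 a1 a2 a3 a4. v = [a0,a1,a2,a3,a4]"
  by (auto simp: length_Suc_conv numeral_eq_Suc)
lemma len7: "length v = 7 \<Longrightarrow> \<exists>a0 a1 a2 a3 a4 a5 a6. v = [a0,a1,a2,a3,a4,a5,a6]"
  by (auto simp: length_Suc_conv numeral_eq_Suc)
lemma len9: "length v = 9 \<Longrightarrow> \<exists>a0 a1 a2 a3 a4 a5 a6 a7 a8. v = [a0,a1,a2,a3,a4,a5,a6,a7,a8]"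
  by (auto simp: length_Suc_conv numeral_eq_Suc)

lemmas E = eca_cons eca_short funpow_expand eca_local_def bitval_def

lemma LocId_5:
  assumes "t + p = 2" "\<forall>a0 a1 a2 a3 a4. (eca_word N ^^ (t+p)) [a0,a1,a2,a3,a4] = (eca_word N ^^ t) (drop off (take (off+2*t+1) [a0,a1,a2,a3,a4]))"
  shows "LocId N t p off"
  unfolding LocId_def
proof (intro allI impI)
  fix v :: "bool list" assume "length v = 2*(t+p)+1"
  then have "length v = 5" using assms(1) by simp
  then obtain a0 a1 a2 a3 a4 where vv: "v = [a0,a1,a2,a3,a4]" using len5[of v] by blast
  show "(eca_word N ^^ (t+p)) v = (eca_word N ^^ t) (drop off (take (off+2*t+1) v))"
    unfolding vv using assms(2) by blast
qed

lemma LocId_7: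
  assumes "t + p = 3" "\<forall>a0 a1 a2 a3 a4 a5 a6. (eca_word N ^^ (t+p)) [a0,a1,a2,a3,a4,a5,a6] = (eca_word N ^^ t) (drop off (take (off+2*t+1) [a0,a1,a2,a3,a4,a5,a6]))"
  shows "LocId N t p off"
  unfolding LocId_def
proof (intro allI impI)
  fix v :: "bool list" assume "length v = 2*(t+p)+1"
  then have "length v = 7" using assms(1) by simp
  then obtain a0 a1 a2 a3 a4 a5 a6 where vv: "v = [a0,a1,a2,a3,a4,a5,a6]" using len7[of v] by blast
  show "(eca_word N ^^ (t+p)) v = (eca_word N ^^ t) (drop off (take (off+2*t+1) v))"
    unfolding vv using assms(2) by blast
qed

lemma LocId_9:
  assumes "t + p = 4" "\<forall>a0 a1 a2 a3 a4 a5 a6 a7 a8. (eca_word N ^^ (t+p)) [a0,a1,a2,a3,a4,a5,a6,a7,a8] = (eca_word N ^^ t) (drop off (take (off+2*t+1) [a0,a1,a2,a3,a4,a5,a6,a7,a8]))"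
  shows "LocId N t p off"
  unfolding LocId_def
proof (intro allI impI)
  fix v :: "bool list" assume "length v = 2*(t+p)+1"
  then have "length v = 9" using assms(1) by simp
  then obtain a0 a1 a2 a3 a4 a5 a6 a7 a8 where vv: "v = [a0,a1,a2,a3,a4,a5,a6,a7,a8]" using len9[of v] by blast
  show "(eca_word N ^^ (t+p)) v = (eca_word N ^^ t) (drop off (take (off+2*t+1) v))"
    unfolding vv using assms(2) by blast
qed

lemma L0: "LocId 0 1 1 0"
  by (rule LocId_5) (simp_all only: all_bool_eq, simp_all add: E)

lemma M0: "\<exists>C::nat. \<forall>n::nat \<ge> 1. D (2 * n + 1) (Pred 0 n) \<le> C"
  by (rule generic[OF L0]) simp_all

lemma L1: "LocId 1 1 2 2"
  by (rule LocId_7) (simp_all only: all_bool_eq, simp_all add: E)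

lemma M1: "\<exists>C::nat. \<forall>n::nat \<ge> 1. D (2 * n + 1) (Pred 1 n) \<le> C"
  by (rule generic[OF L1]) simp_all

lemma L2: "LocId 2 1 1 2"
  by (rule LocId_5) (simp_all only: all_bool_eq, simp_all add: E)

lemma M2: "\<exists>C::nat. \<forall>n::nat \<ge> 1. D (2 * n + 1) (Pred 2 n) \<le> C"
  by (rule generic[OF L2]) simp_all

lemma L4: "LocId 4 1 1 1"
  by (rule LocId_5) (simp_all only: all_bool_eq, simp_all add: E)

lemma M4: "\<exists>C::nat. \<forall>n::nat \<ge> 1. D (2 * n + 1) (Pred 4 n) \<le> C"
  by (rule generic[OF L4]) simp_all

lemma L8: "LocId 8 2 1 0"
  by (rule LocId_7) (simp_all only: all_bool_eq, simp_all add: E)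

lemma M8: "\<exists>C::nat. \<forall>n::nat \<ge> 1. D (2 * n + 1) (Pred 8 n) \<le> C"
  by (rule generic[OF L8]) simp_all

lemma L10: "LocId 10 1 1 2"
  by (rule LocId_5) (simp_all only: all_bool_eq, simp_all add: E)

lemma M10: "\<exists>C::nat. \<forall>n::nat \<ge> 1. D (2 * n + 1) (Pred 10 n) \<le> C"
  by (rule generic[OF L10]) simp_all

lemma L12: "LocId 12 1 1 1"
  by (rule LocId_5) (simp_all only: all_bool_eq, simp_all add: E)

lemma M12: "\<exists>C::nat. \<forall>n::nat \<ge> 1. D (2 * n + 1) (Pred 12 n) \<le> C"
  by (rule generic[OF L12]) simp_all

lemma L19: "LocId 19 2 2 2"
  by (rule LocId_9) (simp_all only: all_bool_eq, simp_all add: E)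

lemma M19: "\<exists>C::nat. \<forall>n::nat \<ge> 1. D (2 * n + 1) (Pred 19 n) \<le> C"
  by (rule generic[OF L19]) simp_all

lemma L24: "LocId 24 2 1 0"
  by (rule LocId_7) (simp_all only: all_bool_eq, simp_all add: E)

lemma M24: "\<exists>C::nat. \<forall>n::nat \<ge> 1. D (2 * n + 1) (Pred 24 n) \<le> C"
  by (rule generic[OF L24]) simp_all

lemma L34: "LocId 34 1 1 2"
  by (rule LocId_5) (simp_all only: all_bool_eq, simp_all add: E)

lemma M34: "\<exists>C::nat. \<forall>n::nat \<ge> 1. D (2 * n + 1) (Pred 34 n) \<le> C"
  by (rule generic[OF L34]) simp_all

lemma L36: "LocId 36 2 1 1"
  by (rule LocId_7) (simp_all only: all_bool_eq, simp_all add: E)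

lemma M36: "\<exists>C::nat. \<forall>n::nat \<ge> 1. D (2 * n + 1) (Pred 36 n) \<le> C"
  by (rule generic[OF L36]) simp_all

lemma L38: "LocId 38 2 2 4"
  by (rule LocId_9) (simp_all only: all_bool_eq, simp_all add: E)

lemma M38: "\<exists>C::nat. \<forall>n::nat \<ge> 1. D (2 * n + 1) (Pred 38 n) \<le> C"
  by (rule generic[OF L38]) simp_all

lemma L42: "LocId 42 1 1 2"
  by (rule LocId_5) (simp_all only: all_bool_eq, simp_all add: E)

lemma M42: "\<exists>C::nat. \<forall>n::nat \<ge> 1. D (2 * n + 1) (Pred 42 n) \<le> C"
  by (rule generic[OF L42]) simp_all

lemma L46: "LocId 46 2 1 2"
  by (rule LocId_7) (simp_all only: all_bool_eq, simp_all add: E)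

lemma M46: "\<exists>C::nat. \<forall>n::nat \<ge> 1. D (2 * n + 1) (Pred 46 n) \<le> C"
  by (rule generic[OF L46]) simp_all

lemma L72: "LocId 72 2 1 1"
  by (rule LocId_7) (simp_all only: all_bool_eq, simp_all add: E)

lemma M72: "\<exists>C::nat. \<forall>n::nat \<ge> 1. D (2 * n + 1) (Pred 72 n) \<le> C"
  by (rule generic[OF L72]) simp_all

lemma L76: "LocId 76 1 1 1"
  by (rule LocId_5) (simp_all only: all_bool_eq, simp_all add: E)

lemma M76: "\<exists>C::nat. \<forall>n::nat \<ge> 1. D (2 * n + 1) (Pred 76 n) \<le> C"
  by (rule generic[OF L76]) simp_all

lemma L108: "LocId 108 2 2 2"
  by (rule LocId_9) (simp_all only: all_bool_eq, simp_all add: E)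

lemma M108: "\<exists>C::nat. \<forall>n::nat \<ge> 1. D (2 * n + 1) (Pred 108 n) \<le> C"
  by (rule generic[OF L108]) simp_all

lemma L127: "LocId 127 1 2 2"
  by (rule LocId_7) (simp_all only: all_bool_eq, simp_all add: E)

lemma M127: "\<exists>C::nat. \<forall>n::nat \<ge> 1. D (2 * n + 1) (Pred 127 n) \<le> C"
  by (rule generic[OF L127]) simp_all

lemma L138: "LocId 138 1 1 2"
  by (rule LocId_5) (simp_all only: all_bool_eq, simp_all add: E)

lemma M138: "\<exists>C::nat. \<forall>n::nat \<ge> 1. D (2 * n + 1) (Pred 138 n) \<le> C"
  by (rule generic[OF L138]) simp_all

lemma L200: "LocId 200 1 1 1"
  by (rule LocId_5) (simp_all only: all_bool_eq, simp_all add: E)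

lemma M200: "\<exists>C::nat. \<forall>n::nat \<ge> 1. D (2 * n + 1) (Pred 200 n) \<le> C"
  by (rule generic[OF L200]) simp_all

theorem mainTheorem2:
  assumes "N \<in> {0, 1, 2, 4, 8, 10, 12, 19, 24, 34, 36, 38, 42, 46, 72, 76, 108, 127, 138, 200}"
  shows "\<exists>C::nat. \<forall>n::nat \<ge> 1. D (2 * n + 1) (Pred N n) \<le> C"
  using assms M0 M1 M2 M4 M8 M10 M12 M19 M24 M34 M36 M38 M42 M46 M72 M76 M108 M127 M138 M200 by auto

end
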